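(* Let $*$ be an order-preserving left action of a monoid $T$ on a poset $X$, and let $Y\subseteq X$ be an order ideal of $X$ which is a meet semilattice under the induced order. Let $\cdot$ be the induced left partial action of $T$ on $Y$ ($t\cdot y$ is defined iff $t*y\in Y$, and then $t\cdot y=t*y$), and assume it satisfies axioms (A), (B), (C); let $\circ$ be its reverse right partial action. Assume moreover that for all $t\in T$, $x\in X$, $y\in Y$: if $x\le t*y$ then $x=t*z$ for some $z\le y$. Then for any $x,y\in Y$ and $s\in T$ such that $x\circ s$ is defined, the meet $x\wedge s*y$ exists in $X$ and $x\wedge s*y=s\cdot((x\circ s)\wedge y)$.
   Context: A left partial action of $T$ on $Y$: $1\cdot y=y$ always defined; if $t\cdot y$ and $s\cdot(t\cdot y)$ are defined then $(st)\cdot y$ is defined and equals it. With $\varphi_t\colon y\mapsto t\cdot y$: (A) $\mathrm{dom}\varphi_t$ and $\mathrm{ran}\varphi_t$ are order ideals of $Y$; (B) $\varphi_t$ is an order-isomorphism from $\mathrm{dom}\varphi_t$ onto $\mathrm{ran}\varphi_t$; (C) $\mathrm{dom}\varphi_t\ne\varnothing$. The reverse right partial action: $y\circ t$ is defined iff $y\in\mathrm{ran}\varphi_t$, and then $y\circ t=\varphi_t^{-1}(y)$. *)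

theory Defs
  imports Main
begin

definition order_ideal_in :: "'x::order set \<Rightarrow> 'x set \<Rightarrow> bool" where
  "order_ideal_in A I \<longleftrightarrow> I \<subseteq> A \<and> (\<forall>y\<in>I. \<forall>x\<in>A. x \<le> y \<longrightarrow> x \<in> I)"

definition is_inf_in :: "'x::order set \<Rightarrow> 'x \<Rightarrow> 'x \<Rightarrow> 'x \<Rightarrow> bool" where
  "is_inf_in A a b m \<longleftrightarrow> m \<in> A \<and> m \<le> a \<and> m \<le> b \<and>
     (\<forall>c\<in>A. c \<le> a \<and> c \<le> b \<longrightarrow> c \<le> m)"

definition meet_in :: "'x::order set \<Rightarrow> 'x \<Rightarrow> 'x \<Rightarrow> 'x" where
  "meet_in A a b = (THE m. is_inf_in A a b m)"

definition meet_semilattice_on :: "'x::order set \<Rightarrow> bool" where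
  "meet_semilattice_on A \<longleftrightarrow> (\<forall>a\<in>A. \<forall>b\<in>A. \<exists>m. is_inf_in A a b m)"

definition order_pres_action :: "('t::monoid_mult \<Rightarrow> 'x::order \<Rightarrow> 'x) \<Rightarrow> bool" where
  "order_pres_action act \<longleftrightarrow>
     (\<forall>x. act 1 x = x) \<and> (\<forall>s t x. act (s * t) x = act s (act t x)) \<and>
     (\<forall>t x x'. x \<le> x' \<longrightarrow> act t x \<le> act t x')"

text \<open>Induced partial action on Y: t . y defined iff t * y in Y.
  Domain and range of phi_t.\<close>
definition pdom :: "('t \<Rightarrow> 'x \<Rightarrow> 'x) \<Rightarrow> 'x set \<Rightarrow> 't \<Rightarrow> 'x set" where
  "pdom act Y t = {y \<in> Y. act t y \<in> Y}"

definition pran :: "('t \<Rightarrow> 'x \<Rightarrow> 'x) \<Rightarrow> 'x set \<Rightarrow> 't \<Rightarrow> 'x set" where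
  "pran act Y t = act t ` pdom act Y t"

text \<open>Reverse right partial action: y o t = phi_t^{-1}(y), for y in ran phi_t.\<close>
definition ract :: "('t \<Rightarrow> 'x \<Rightarrow> 'x) \<Rightarrow> 'x set \<Rightarrow> 'x \<Rightarrow> 't \<Rightarrow> 'x" where
  "ract act Y y t = (THE z. z \<in> pdom act Y t \<and> act t z = y)"

definition axioms_ABC :: "('t \<Rightarrow> 'x::order \<Rightarrow> 'x) \<Rightarrow> 'x set \<Rightarrow> bool" where
  "axioms_ABC act Y \<longleftrightarrow> (\<forall>t.
     order_ideal_in Y (pdom act Y t) \<and> order_ideal_in Y (pran act Y t) \<and>
     inj_on (act t) (pdom act Y t) \<and>
     (\<forall>y\<in>pdom act Y t. \<forall>y'\<in>pdom act Y t. y \<le> y' \<longleftrightarrow> act t y \<le> act t y') \<and>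
     pdom act Y t \<noteq> {})"

end

theory Submission
  imports Defs
begin

theorem lemma3p8:
  fixes act :: "'t::monoid_mult \<Rightarrow> 'x::order \<Rightarrow> 'x" and Y :: "'x set"
  assumes "order_pres_action act"
    and "order_ideal_in UNIV Y"
    and "meet_semilattice_on Y"
    and "axioms_ABC act Y"
    and "\<forall>t x y. y \<in> Y \<and> x \<le> act t y \<longrightarrow> (\<exists>z. z \<le> y \<and> x = act t z)"
    and "x \<in> Y" and "y \<in> Y"
    and "x \<in> pran act Y s"
  shows "act s (meet_in Y (ract act Y x s) y) \<in> Y \<and>
         is_inf_in UNIV x (act s y) (act s (meet_in Y (ract act Y x s) y))"
proof -
  have mono: "\<And>a b. a \<le> b \<Longrightarrow> act s a \<le> act s b" using assms(1) unfolding order_pres_action_def by blast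
  have idY: "\<And>a b. b \<in> Y \<Longrightarrow> a \<le> b \<Longrightarrow> a \<in> Y" using assms(2) unfolding order_ideal_in_def by blast
  have dom_id: "\<And>a b. b \<in> pdom act Y s \<Longrightarrow> a \<in> Y \<Longrightarrow> a \<le> b \<Longrightarrow> a \<in> pdom act Y s"
    using assms(4) unfolding axioms_ABC_def order_ideal_in_def by blast
  have inj: "inj_on (act s) (pdom act Y s)" using assms(4) unfolding axioms_ABC_def by blast
  obtain u where u: "u \<in> pdom act Y s" "x = act s u" using assms(8) unfolding pran_def by blast
  have uY: "u \<in> Y" using u unfolding pdom_def by blast
  have r: "ract act Y x s = u"
    unfolding ract_def
  proof (rule the_equality)
    show "u \<in> pdom act Y s \<and> act s u = x" using u by simp
    fix z assume "z \<in> pdom act Y s \<and> act s z = x"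
    then show "z = u" using inj u by (metis inj_on_def)
  qed
  obtain m where m: "is_inf_in Y u y m" using assms(3) uY assms(7) unfolding meet_semilattice_on_def by blast
  have mm: "meet_in Y u y = m"
    unfolding meet_in_def
  proof (rule the_equality)
    show "is_inf_in Y u y m" by (rule m)
    fix m' assume "is_inf_in Y u y m'"
    then show "m' = m" using m unfolding is_inf_in_def by (meson order.antisym)
  qed
  have mY: "m \<in> Y" "m \<le> u" "m \<le> y" using m unfolding is_inf_in_def by auto
  have mD: "m \<in> pdom act Y s" using dom_id[OF u(1) mY(1,2)] .
  have smY: "act s m \<in> Y" using mD unfolding pdom_def by blast
  have glb: "c \<le> act s m" if c1: "c \<le> x" and c2: "c \<le> act s y" for c
  proof -
    obtain z where z: "z \<le> u" "c = act s z" using assms(5) uY c1 u(2) by blast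
    have zY: "z \<in> Y" using idY[OF uY z(1)] .
    have zD: "z \<in> pdom act Y s" using dom_id[OF u(1) zY z(1)] .
    obtain w where w: "w \<le> y" "act s z = act s w" using assms(5) assms(7) c2 z(2) by metis
    have wY: "w \<in> Y" using idY[OF assms(7) w(1)] .
    have cY: "c \<in> Y" using idY[OF assms(6) c1] .
    have wD: "w \<in> pdom act Y s" using wY cY w(2) z(2) unfolding pdom_def by simp
    have "w = z" using inj wD zD w(2) by (metis inj_on_def)
    hence "z \<le> y" using w by simp
    hence "z \<le> m" using m zY z(1) unfolding is_inf_in_def by blast
    thus ?thesis using mono z(2) by simp
  qed
  show ?thesis unfolding r mm is_inf_in_def
    using smY mono[OF mY(2)] mono[OF mY(3)] u(2) glb by auto
qed

end
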